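(* Let $V\subset\mathbb{R}^d$ be a finite non-degenerate antichain and let $p\in S_V$ be a generated point. Then $p$ is a characteristic point if and only if there are no minima $u,v\in D_p$ with $T_p(u)\subsetneq T_p(v)$.
   Context: For $x,y\in\mathbb{R}^d$, $x\le y$ (dominance order) means $x_i\le y_i$ for all $i$; $y\rhd x$ means $y_i>x_i$ for all $i$; $y\rhd_i x$ means $y_i=x_i$ and $y_j>x_j$ for all $j\neq i$. The join is the componentwise maximum. $V\subset\mathbb{R}^d$ is a finite antichain in the dominance order (elements are called minima). The orthogonal surface $S_V$ is the topological boundary of $\langle V\rangle=\{x: x\ge v\text{ for some }v\in V\}$; equivalently $p\in S_V$ iff there is $v\in V$ with $v\le p$ and no $w\in V$ with $p\rhd w$. For $p\in S_V$, $D_p=\{v\in V:v\le p\}$ and for $v\in D_p$, $T_p(v)=\{i: p_i=v_i\}$. A generated point is a point $p\in S_V$ equal to $\bigvee G$ for some nonempty $G\subseteq V$. Flats: $U_i(v)=\{p\in S_V: p\rhd_i v\}$; for $v,w\in V$ put $v\sim_i w$ iff $U_i(v)\cap U_i(w)\neq\emptyset$, and let $\sim_i^c$ be the reflexive–transitive closure; the $i$-flat of $v$ is $F_i(v)=\overline{\bigcup_{w\sim_i^c v}U_i(w)}$ (topological closure), and an $i$-flat is any set of this form. A characteristic point is a point of $S_V$ that lies in some $i$-flat for every $i\in\{1,\dots,d\}$. $V$ (and $S_V$) is degenerate if there exist a characteristic point $p$, minima $x,u,v\in D_p$ and coordinates $i\neq j$ with $u_i<v_i=x_i=p_i$ and $v_j<u_j=x_j=p_j$;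 otherwise $V$ is non-degenerate. *)

theory Defs
  imports "HOL-Analysis.Analysis"
begin

text \<open>Points of R^d are modelled as vectors of type real ^ 'd, coordinates indexed
by the finite type 'd (so d = CARD('d)).\<close>

definition dom_le :: "real ^ 'd \<Rightarrow> real ^ 'd \<Rightarrow> bool" where
  "dom_le x y \<longleftrightarrow> (\<forall>i. x $ i \<le> y $ i)"

definition dom_gt :: "real ^ 'd \<Rightarrow> real ^ 'd \<Rightarrow> bool" where
  "dom_gt y x \<longleftrightarrow> (\<forall>i. y $ i > x $ i)"

definition dom_gt_i :: "'d \<Rightarrow> real ^ 'd \<Rightarrow> real ^ 'd \<Rightarrow> bool" where
  "dom_gt_i i y x \<longleftrightarrow> y $ i = x $ i \<and> (\<forall>j. j \<noteq> i \<longrightarrow> y $ j > x $ j)"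

definition join :: "(real ^ 'd) set \<Rightarrow> real ^ 'd" where
  "join G = (\<chi> i. Max ((\<lambda>v. v $ i) ` G))"

definition antichain :: "(real ^ 'd) set \<Rightarrow> bool" where
  "antichain V \<longleftrightarrow> (\<forall>v\<in>V. \<forall>w\<in>V. dom_le v w \<longrightarrow> v = w)"

definition surface :: "(real ^ 'd) set \<Rightarrow> (real ^ 'd) set" where
  "surface V = {p. (\<exists>v\<in>V. dom_le v p) \<and> \<not> (\<exists>w\<in>V. dom_gt p w)}"

definition Dp :: "(real ^ 'd) set \<Rightarrow> real ^ 'd \<Rightarrow> (real ^ 'd) set" where
  "Dp V p = {v\<in>V. dom_le v p}"

definition Tp :: "real ^ 'd \<Rightarrow> real ^ 'd \<Rightarrow> 'd set" where
  "Tp p v = {i. p $ i = v $ i}"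

definition generated :: "(real ^ 'd) set \<Rightarrow> real ^ 'd \<Rightarrow> bool" where
  "generated V p \<longleftrightarrow> p \<in> surface V \<and> (\<exists>G. G \<noteq> {} \<and> G \<subseteq> V \<and> p = join G)"

definition Uflat :: "(real ^ 'd) set \<Rightarrow> 'd \<Rightarrow> real ^ 'd \<Rightarrow> (real ^ 'd) set" where
  "Uflat V i v = {p \<in> surface V. dom_gt_i i p v}"

definition sim_rel :: "(real ^ 'd) set \<Rightarrow> 'd \<Rightarrow> ((real ^ 'd) \<times> (real ^ 'd)) set" where
  "sim_rel V i = {(v, w). v \<in> V \<and> w \<in> V \<and> Uflat V i v \<inter> Uflat V i w \<noteq> {}}"

definition simc :: "(real ^ 'd) set \<Rightarrow> 'd \<Rightarrow> ((real ^ 'd) \<times> (real ^ 'd)) set" where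
  "simc V i = (sim_rel V i)\<^sup>*"

definition flat :: "(real ^ 'd) set \<Rightarrow> 'd \<Rightarrow> real ^ 'd \<Rightarrow> (real ^ 'd) set" where
  "flat V i v = closure (\<Union> {Uflat V i w | w. w \<in> V \<and> (v, w) \<in> simc V i})"

definition is_flat :: "(real ^ 'd) set \<Rightarrow> 'd \<Rightarrow> (real ^ 'd) set \<Rightarrow> bool" where
  "is_flat V i F \<longleftrightarrow> (\<exists>v\<in>V. F = flat V i v)"

definition characteristic :: "(real ^ 'd) set \<Rightarrow> real ^ 'd \<Rightarrow> bool" where
  "characteristic V p \<longleftrightarrow> p \<in> surface V \<and> (\<forall>i. \<exists>F. is_flat V i F \<and> p \<in> F)"

definition degenerate :: "(real ^ 'd) set \<Rightarrow> bool" where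
  "degenerate V \<longleftrightarrow> (\<exists>p x u v i j. characteristic V p \<and> x \<in> Dp V p \<and> u \<in> Dp V p \<and> v \<in> Dp V p
      \<and> i \<noteq> j \<and> u $ i < v $ i \<and> v $ i = x $ i \<and> x $ i = p $ i
      \<and> v $ j < u $ j \<and> u $ j = x $ j \<and> x $ j = p $ j)"

end

theory Submission
  imports Defs
begin

lemma closed_K: "closed {x::real^'d. x$i = w$i \<and> (\<forall>k. w$k \<le> x$k)}"
  by (intro closed_Collect_conj closed_Collect_all closed_Collect_eq closed_Collect_le continuous_intros)

lemma open_O: "open {x::real^'d. \<forall>k. k \<in> T \<or> u$k < x$k}"
proof -
  have "{x::real^'d. \<forall>k. k \<in> T \<or> u$k < x$k} = (\<Inter>k\<in>-T. {x. u$k < x$k})" by auto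
  moreover have "open (\<Inter>k\<in>-T. {x::real^'d. u$k < x$k})"
    by (intro open_INT ballI open_Collect_less continuous_intros) auto
  ultimately show ?thesis by simp
qed

lemma flat_point:
  assumes fin: "finite V" and pF: "p \<in> flat V i v0"
  shows "\<exists>w\<in>V. p \<in> closure (Uflat V i w)"
proof -
  let ?W = "{w. w \<in> V \<and> (v0, w) \<in> simc V i}"
  have eq: "{Uflat V i w | w. w \<in> V \<and> (v0, w) \<in> simc V i} = (\<lambda>w. Uflat V i w) ` ?W" by auto
  have finW: "finite ?W" using fin by auto
  have "closure (\<Union>((\<lambda>w. Uflat V i w) ` ?W)) \<subseteq> \<Union>(closure ` (\<lambda>w. Uflat V i w) ` ?W)"
    by (rule closure_minimal) (use finW in \<open>auto intro!: closed_Union dest: closure_subset[THEN subsetD]\<close>)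
  with pF show ?thesis unfolding flat_def eq by auto
qed

theorem proposition4p2:
  fixes V :: "(real ^ 'd) set" and p :: "real ^ 'd"
  assumes "finite V" and "antichain V" and "\<not> degenerate V"
    and "generated V p"
  shows "characteristic V p \<longleftrightarrow> \<not> (\<exists>u\<in>Dp V p. \<exists>v\<in>Dp V p. Tp p u \<subset> Tp p v)"
proof
  assume ch: "characteristic V p"
  show "\<not> (\<exists>u\<in>Dp V p. \<exists>v\<in>Dp V p. Tp p u \<subset> Tp p v)"
  proof
    assume "\<exists>u\<in>Dp V p. \<exists>v\<in>Dp V p. Tp p u \<subset> Tp p v"
    then obtain u v where u: "u \<in> Dp V p" and v: "v \<in> Dp V p" and sub: "Tp p u \<subset> Tp p v" by blast
    then obtain i where iv: "i \<in> Tp p v" and iu: "i \<notin> Tp p u" by blast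
    from ch obtain F where "is_flat V i F" "p \<in> F" unfolding characteristic_def by blast
    then obtain v0 where "v0 \<in> V" "p \<in> flat V i v0" unfolding is_flat_def by blast
    then obtain w where wV: "w \<in> V" and pcl: "p \<in> closure (Uflat V i w)"
      using flat_point[OF assms(1)] by blast
    have "Uflat V i w \<subseteq> {x. x$i = w$i \<and> (\<forall>k. w$k \<le> x$k)}"
      unfolding Uflat_def dom_gt_i_def by (auto simp: less_imp_le) (metis order_refl less_imp_le)
    then have "closure (Uflat V i w) \<subseteq> {x. x$i = w$i \<and> (\<forall>k. w$k \<le> x$k)}"
      by (intro closure_minimal closed_K)
    with pcl have wi: "p$i = w$i" and wle: "\<forall>k. w$k \<le> p$k" by auto
    have wD: "w \<in> Dp V p" using wV wle unfolding Dp_def dom_le_def by auto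
    let ?O = "{x::real^'d. \<forall>k. k \<in> Tp p u \<or> u$k < x$k}"
    have pO: "p \<in> ?O" using u unfolding Dp_def dom_le_def Tp_def
      by (auto simp: order.order_iff_strict)
    have "?O \<inter> closure (Uflat V i w) \<noteq> {}" using pO pcl by auto
    then have "?O \<inter> Uflat V i w \<noteq> {}" using open_Int_closure_eq_empty[OF open_O] by blast
    then obtain q where qO: "q \<in> ?O" and qU: "q \<in> Uflat V i w" by blast
    have "\<not> dom_gt q u" using qU u unfolding Uflat_def surface_def Dp_def by auto
    then obtain j where qj: "q$j \<le> u$j" unfolding dom_gt_def by (auto simp: not_less)
    with qO have ju: "j \<in> Tp p u" by force
    have jne: "j \<noteq> i" using ju iu by auto
    have "w$j < q$j" using qU jne unfolding Uflat_def dom_gt_i_def by auto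
    have uj: "u$j = p$j" using ju unfolding Tp_def by auto
    have vj: "v$j = p$j" using ju sub unfolding Tp_def by auto
    have vi: "v$i = p$i" using iv unfolding Tp_def by auto
    have ui: "u$i < p$i" using iu u unfolding Tp_def Dp_def dom_le_def
      by (auto simp: order.order_iff_strict)
    have "degenerate V"
      unfolding degenerate_def
      apply (rule exI[of _ p], rule exI[of _ v], rule exI[of _ u], rule exI[of _ w],
             rule exI[of _ i], rule exI[of _ j])
      using ch v u wD jne ui vi wi uj vj \<open>w$j < q$j\<close> qj by auto
    with assms(3) show False by blast
  qed
next
  assume H: "\<not> (\<exists>u\<in>Dp V p. \<exists>v\<in>Dp V p. Tp p u \<subset> Tp p v)"
  have pS: "p \<in> surface V" using assms(4) unfolding generated_def by blast
  obtain G where G: "G \<noteq> {}" "G \<subseteq> V" "p = join G" using assms(4) unfolding generated_def by blast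
  have finG: "finite G" using G(2) assms(1) finite_subset by blast
  show "characteristic V p"
    unfolding characteristic_def
  proof (intro conjI allI pS)
    fix i
    have "Max ((\<lambda>v. v $ i) ` G) \<in> (\<lambda>v. v $ i) ` G" using finG G(1) by (intro Max_in) auto
    then obtain v where vG: "v \<in> G" and vi: "v$i = p$i" using G(3) unfolding join_def by auto
    have vle: "\<forall>k. v$k \<le> p$k"
    proof
      fix k
      have "v$k \<le> Max ((\<lambda>v. v $ k) ` G)" using finG vG by (intro Max_ge) auto
      then show "v$k \<le> p$k" using G(3) unfolding join_def by simp
    qed
    have vV: "v \<in> V" using vG G(2) by auto
    have vD: "v \<in> Dp V p" using vV vle unfolding Dp_def dom_le_def by auto
    define c :: "real^'d" where "c = (\<chi> j. if j \<in> Tp p v \<and> j \<noteq> i then 1 else 0)"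
    define f where "f = (\<lambda>t::real. p + t *\<^sub>R c)"
    have lim: "(f \<longlongrightarrow> p) (at_right 0)"
    proof -
      have "(f \<longlongrightarrow> p + 0 *\<^sub>R c) (at_right 0)" unfolding f_def
        by (intro tendsto_intros)
      then show ?thesis by simp
    qed
    have ev1: "eventually (\<lambda>t. \<forall>y\<in>V \<times> UNIV. p$(snd y) < (fst y)$(snd y) \<longrightarrow> t < (fst y)$(snd y) - p$(snd y)) (at_right (0::real))"
    proof (rule eventually_ball_finite)
      show "finite (V \<times> (UNIV::'d set))" using assms(1) by simp
      show "\<forall>y\<in>V \<times> UNIV. eventually (\<lambda>t. p$(snd y) < (fst y)$(snd y) \<longrightarrow> t < (fst y)$(snd y) - p$(snd y)) (at_right (0::real))"
      proof
        fix y :: "(real^'d) \<times> 'd"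
        show "eventually (\<lambda>t. p$(snd y) < (fst y)$(snd y) \<longrightarrow> t < (fst y)$(snd y) - p$(snd y)) (at_right (0::real))"
        proof (cases "p$(snd y) < (fst y)$(snd y)")
          case True
          then show ?thesis unfolding eventually_at_right_field by (intro exI[of _ "(fst y)$(snd y) - p$(snd y)"]) auto
        next
          case False
          then show ?thesis by simp
        qed
      qed
    qed
    have ev2: "eventually (\<lambda>t. 0 < t) (at_right (0::real))"
      by (rule eventually_at_right_less)
    have inU: "f t \<in> Uflat V i v" if t0: "0 < t" and tg: "\<forall>y\<in>V \<times> UNIV. p$(snd y) < (fst y)$(snd y) \<longrightarrow> t < (fst y)$(snd y) - p$(snd y)" for t
    proof -
      have fk: "f t $ k = (if k \<in> Tp p v \<and> k \<noteq> i then p$k + t else p$k)" for k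
        unfolding f_def c_def by simp
      have pf: "p$k \<le> f t $ k" for k using fk[of k] t0 by auto
      have "\<not> (\<exists>w\<in>V. dom_gt (f t) w)"
      proof
        assume "\<exists>w\<in>V. dom_gt (f t) w"
        then obtain w where wV: "w \<in> V" and gt: "\<forall>k. w$k < f t $ k" unfolding dom_gt_def by blast
        have wle: "w$k \<le> p$k" for k
        proof (rule ccontr)
          assume nk: "\<not> w$k \<le> p$k"
          then have "t < w$k - p$k" using tg wV by force
          then show False using nk gt[rule_format, of k] fk[of k] by (auto split: if_splits)
        qed
        have wD: "w \<in> Dp V p" using wV wle unfolding Dp_def dom_le_def by auto
        have "Tp p w \<subseteq> Tp p v - {i}"
        proof
          fix k assume "k \<in> Tp p w"
          then have "p$k = w$k" unfolding Tp_def by auto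
          then show "k \<in> Tp p v - {i}" using gt[rule_format, of k] fk[of k] by (auto split: if_splits)
        qed
        moreover have "i \<in> Tp p v" using vi unfolding Tp_def by auto
        ultimately have "Tp p w \<subset> Tp p v" by blast
        with H wD vD show False by blast
      qed
      moreover have "dom_le v (f t)" unfolding dom_le_def using vle pf by (meson order_trans)
      moreover have "dom_gt_i i (f t) v"
        unfolding dom_gt_i_def
      proof (intro conjI allI impI)
        show "f t $ i = v $ i" using fk[of i] vi by simp
        fix j assume "j \<noteq> i"
        show "v $ j < f t $ j"
        proof (cases "j \<in> Tp p v")
          case True
          then show ?thesis using fk[of j] \<open>j \<noteq> i\<close> t0 unfolding Tp_def by auto
        next
          case False
          then show ?thesis using fk[of j] vle[rule_format, of j] unfolding Tp_def by auto
        qed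
      qed
      ultimately show ?thesis unfolding Uflat_def surface_def using vV by auto
    qed
    have "p \<in> closure (Uflat V i v)"
      unfolding closure_approachable
    proof (intro allI impI)
      fix e :: real assume "0 < e"
      then have "eventually (\<lambda>t. dist (f t) p < e) (at_right 0)" using lim by (rule tendstoD[rotated])
      then have "eventually (\<lambda>t. dist (f t) p < e \<and> 0 < t \<and> (\<forall>y\<in>V \<times> UNIV. p$(snd y) < (fst y)$(snd y) \<longrightarrow> t < (fst y)$(snd y) - p$(snd y))) (at_right (0::real))"
        using ev1 ev2 by eventually_elim auto
      then obtain t where "dist (f t) p < e" "0 < t" "\<forall>y\<in>V \<times> UNIV. p$(snd y) < (fst y)$(snd y) \<longrightarrow> t < (fst y)$(snd y) - p$(snd y)"
        using eventually_happens'[OF trivial_limit_at_right_real] by blast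
      then show "\<exists>y\<in>Uflat V i v. dist y p < e" using inU by blast
    qed
    moreover have "Uflat V i v \<subseteq> \<Union> {Uflat V i w | w. w \<in> V \<and> (v, w) \<in> simc V i}"
      using vV unfolding simc_def by blast
    ultimately have "p \<in> flat V i v" unfolding flat_def using closure_mono by blast
    then show "\<exists>F. is_flat V i F \<and> p \<in> F" using vV unfolding is_flat_def by blast
  qed
qed

end
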